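(* Let $X$ and $V$ be independent random variables, where $V\sim\mathcal N(0,\sigma^2)$ and $X\le_{df}(d,w,o)$ for some nonzero $d$ and nonnegative $w,o$ with $|d|>w$. Then $$\mathbb E[(X-Q_d(X+V))^2]\le\mathbb E[(X-Q_d(X))^2]+\sum_{i=1}^{\infty}\Big(i|d|+\frac w2\Big)^2\cdot 2Q\Big(\frac{(2i-1)|d|-w}{2\sigma}\Big)+o\cdot\Big(\big(d+\tfrac d2\big)^2+\sum_{i=2}^{\infty}\big(id+\tfrac d2\big)^2\cdot 2Q\Big(\frac{(i-1)|d|}{\sigma}\Big)\Big).$$
   Context: For $x\neq0$ and real $y$, $Q_x(y)=x\lfloor y/x+1/2\rfloor$ (quantization) and $R_x(y)=y-Q_x(y)$. The unsubscripted $Q$ denotes the Gaussian tail function $Q(x)=\frac1{\sqrt{2\pi}}\int_x^\infty e^{-u^2/2}\,du$. For a random variable $X$, nonzero $d$ and nonnegative reals $w,o$ with $|d|>w$, write $X\le_{df}(d,w,o)$ if $\mathbb P\{X\notin\bigcup_{i\in\mathbb Z}[id-\frac w2,id+\frac w2]\}\le o$. *)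

theory Defs
  imports "HOL-Probability.Probability"
begin

definition quant :: "real \<Rightarrow> real \<Rightarrow> real" where
  "quant x y = x * real_of_int \<lfloor>y / x + 1/2\<rfloor>"

definition gaussQ :: "real \<Rightarrow> real" where
  "gaussQ x = (1 / sqrt (2 * pi)) * (LBINT u:{x..}. exp (- (u\<^sup>2) / 2))"

definition df_le :: "'a measure \<Rightarrow> ('a \<Rightarrow> real) \<Rightarrow> real \<Rightarrow> real \<Rightarrow> real \<Rightarrow> bool" where
  "df_le M X d w ov \<longleftrightarrow>
     measure M {\<omega> \<in> space M. X \<omega> \<notin> (\<Union>i::int. {real_of_int i * d - w/2 .. real_of_int i * d + w/2})} \<le> ov"

end

theory Submission
  imports Defs
begin

lemma floor_shift_bound:
  fixes y u :: real
  defines "k \<equiv> \<lfloor>y+u+1/2\<rfloor> - \<lfloor>y+1/2\<rfloor>"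
  assumes "k \<noteq> 0"
  shows "\<bar>u\<bar> \<ge> \<bar>real_of_int k\<bar> - 1/2 - \<bar>y - real_of_int \<lfloor>y+1/2\<rfloor>\<bar>"
proof -
  have a1: "real_of_int \<lfloor>y+u+1/2\<rfloor> \<le> y+u+1/2" "y+u+1/2 < real_of_int \<lfloor>y+u+1/2\<rfloor> + 1"
    by linarith+
  have a2: "real_of_int \<lfloor>y+1/2\<rfloor> \<le> y+1/2" "y+1/2 < real_of_int \<lfloor>y+1/2\<rfloor> + 1"
    by linarith+
  have kr: "real_of_int k = real_of_int \<lfloor>y+u+1/2\<rfloor> - real_of_int \<lfloor>y+1/2\<rfloor>"
    unfolding k_def by simp
  consider "k \<ge> 1" | "k \<le> -1" using assms(2) by linarith
  then show ?thesis
  proof cases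
    case 1
    then have "real_of_int k \<ge> 1" by simp
    then show ?thesis using a1 a2 kr by (simp add: abs_if split: if_splits) linarith?
  next
    case 2
    then have "real_of_int k \<le> -1" by simp
    then show ?thesis using a1 a2 kr by (simp add: abs_if split: if_splits) linarith?
  qed
qed

lemma quant_res_le: assumes "d \<noteq> 0" shows "\<bar>x - quant d x\<bar> \<le> \<bar>d\<bar>/2"
proof -
  let ?y = "x/d"
  have x: "x = d * ?y" using assms by simp
  have t: "\<bar>?y - real_of_int \<lfloor>?y+1/2\<rfloor>\<bar> \<le> 1/2" by linarith
  have t2: "\<bar>d\<bar> * \<bar>?y - real_of_int \<lfloor>?y+1/2\<rfloor>\<bar> \<le> \<bar>d\<bar> * (1/2)"
    by (rule mult_left_mono[OF t]) simp
  have "x - quant d x = d * (?y - real_of_int \<lfloor>?y+1/2\<rfloor>)"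
    unfolding quant_def using assms by (simp add: algebra_simps)
  then show ?thesis using t2 by (simp add: abs_mult)
qed

lemma quant_res_good:
  assumes "d \<noteq> 0" "w \<ge> 0" "\<bar>d\<bar> > w" "x \<in> (\<Union>i::int. {real_of_int i * d - w/2 .. real_of_int i * d + w/2})"
  shows "\<bar>x - quant d x\<bar> \<le> w/2"
proof -
  obtain i :: int where "real_of_int i * d - w/2 \<le> x" "x \<le> real_of_int i * d + w/2" using assms(4) by auto
  then have i: "\<bar>x - real_of_int i * d\<bar> \<le> w/2" by (simp only: abs_le_iff) linarith
  define e where "e = (x - real_of_int i * d) / d"
  have x: "x/d = real_of_int i + e" unfolding e_def using assms(1) by (simp add: field_simps)
  have "\<bar>e\<bar> * \<bar>d\<bar> \<le> w/2" unfolding e_def using assms(1) i by (simp add: abs_divide)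
  then have "\<bar>e\<bar> * \<bar>d\<bar> < \<bar>d\<bar> * (1/2)" using assms(3) by linarith
  then have "\<bar>e\<bar> < 1/2" using assms(1) by (simp add: mult.commute)
  then have "\<lfloor>x/d + 1/2\<rfloor> = i" unfolding x by (intro floor_unique) (auto simp: abs_less_iff)
  then have "quant d x = real_of_int i * d" unfolding quant_def by simp
  then show ?thesis using i by simp
qed

lemma quant_shift:
  assumes "d \<noteq> 0"
  shows "quant d (x+v) = quant d x + real_of_int (\<lfloor>(x+v)/d+1/2\<rfloor> - \<lfloor>x/d+1/2\<rfloor>) * d"
    and "\<lfloor>(x+v)/d+1/2\<rfloor> - \<lfloor>x/d+1/2\<rfloor> \<noteq> 0 \<Longrightarrow>
       \<bar>v\<bar> \<ge> (\<bar>real_of_int (\<lfloor>(x+v)/d+1/2\<rfloor> - \<lfloor>x/d+1/2\<rfloor>)\<bar> - 1/2) * \<bar>d\<bar> - \<bar>x - quant d x\<bar>"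
proof -
  show "quant d (x+v) = quant d x + real_of_int (\<lfloor>(x+v)/d+1/2\<rfloor> - \<lfloor>x/d+1/2\<rfloor>) * d"
    unfolding quant_def by (simp add: algebra_simps)
next
  let ?k = "\<lfloor>(x+v)/d+1/2\<rfloor> - \<lfloor>x/d+1/2\<rfloor>"
  assume k: "?k \<noteq> 0"
  have e: "(x+v)/d = x/d + v/d" by (simp add: add_divide_distrib)
  have b: "\<bar>v/d\<bar> \<ge> \<bar>real_of_int ?k\<bar> - 1/2 - \<bar>x/d - real_of_int \<lfloor>x/d+1/2\<rfloor>\<bar>"
    using floor_shift_bound[of "x/d" "v/d"] k unfolding e by simp
  have "\<bar>d\<bar> * (\<bar>real_of_int ?k\<bar> - 1/2 - \<bar>x/d - real_of_int \<lfloor>x/d+1/2\<rfloor>\<bar>) \<le> \<bar>d\<bar> * \<bar>v/d\<bar>"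
    by (rule mult_left_mono[OF b]) simp
  moreover have "\<bar>d\<bar> * \<bar>v/d\<bar> = \<bar>v\<bar>" using assms by (simp add: abs_divide)
  moreover have "\<bar>d\<bar> * \<bar>x/d - real_of_int \<lfloor>x/d+1/2\<rfloor>\<bar> = \<bar>x - quant d x\<bar>"
  proof -
    have "x - quant d x = d * (x/d - real_of_int \<lfloor>x/d+1/2\<rfloor>)"
      unfolding quant_def using assms by (simp add: algebra_simps)
    then show ?thesis by (simp add: abs_mult)
  qed
  ultimately show "\<bar>v\<bar> \<ge> (\<bar>real_of_int ?k\<bar> - 1/2) * \<bar>d\<bar> - \<bar>x - quant d x\<bar>"
    by (simp add: algebra_simps)
qed

lemma quant_pt:
  fixes x v d B :: real
  assumes "d \<noteq> 0" "\<bar>x - quant d x\<bar> \<le> B"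
  shows "(x - quant d (x+v))\<^sup>2 = (x - quant d x)\<^sup>2 \<or>
    (\<exists>n::nat. (x - quant d (x+v))\<^sup>2 \<le> (real (n+1) * \<bar>d\<bar> + B)\<^sup>2 \<and>
       (real (n+1) - 1/2) * \<bar>d\<bar> - B \<le> \<bar>v\<bar>)"
proof (cases "\<lfloor>(x+v)/d+1/2\<rfloor> - \<lfloor>x/d+1/2\<rfloor> = 0")
  case True
  then show ?thesis using quant_shift(1)[OF assms(1), of x v] by simp
next
  case False
  define k where "k = \<lfloor>(x+v)/d+1/2\<rfloor> - \<lfloor>x/d+1/2\<rfloor>"
  define n where "n = nat \<bar>k\<bar> - 1"
  have kn: "real (n+1) = \<bar>real_of_int k\<bar>" using False unfolding n_def k_def by (simp add: of_nat_diff)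
  have q: "quant d (x+v) = quant d x + real_of_int k * d" using quant_shift(1)[OF assms(1)] k_def by simp
  have v: "\<bar>v\<bar> \<ge> (\<bar>real_of_int k\<bar> - 1/2) * \<bar>d\<bar> - \<bar>x - quant d x\<bar>"
    using quant_shift(2)[OF assms(1)] False k_def by simp
  have "\<bar>x - quant d (x+v)\<bar> \<le> \<bar>real_of_int k\<bar> * \<bar>d\<bar> + B"
  proof -
    have "\<bar>x - quant d (x+v)\<bar> = \<bar>(x - quant d x) - real_of_int k * d\<bar>" using q by simp
    also have "\<dots> \<le> \<bar>x - quant d x\<bar> + \<bar>real_of_int k * d\<bar>" by (rule abs_triangle_ineq4)
    finally show ?thesis using assms(2) by (simp add: abs_mult)
  qed
  then have "\<bar>x - quant d (x+v)\<bar>\<^sup>2 \<le> (\<bar>real_of_int k\<bar> * \<bar>d\<bar> + B)\<^sup>2"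
    by (rule power_mono) simp
  then have "(x - quant d (x+v))\<^sup>2 \<le> (real (n+1) * \<bar>d\<bar> + B)\<^sup>2"
    unfolding kn by simp
  moreover have "(real (n+1) - 1/2) * \<bar>d\<bar> - B \<le> \<bar>v\<bar>" unfolding kn using v assms(2) by linarith
  ultimately show ?thesis by blast
qed

lemma (in prob_space) std_tail:
  assumes "distributed M lborel Z (normal_density 0 1)"
  shows "prob {\<omega>\<in>space M. a \<le> Z \<omega>} = gaussQ a"
proof -
  have [measurable]: "Z \<in> borel_measurable M" using distributed_measurable[OF assms] by simp
  have "prob {\<omega>\<in>space M. a \<le> Z \<omega>} = (\<integral>\<omega>. indicator {a..} (Z \<omega>) \<partial>M)"
  proof -
    have "(\<integral>\<omega>. indicator {a..} (Z \<omega>) \<partial>M) = (\<integral>\<omega>. indicator {\<omega>\<in>space M. a \<le> Z \<omega>} \<omega> \<partial>M)"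
      by (intro Bochner_Integration.integral_cong) (auto simp: indicator_def)
    also have "\<dots> = prob {\<omega>\<in>space M. a \<le> Z \<omega>}" by (simp add: Int_absorb2 Collect_subset)
    finally show ?thesis by simp
  qed
  also have "\<dots> = (\<integral>x. normal_density 0 1 x * indicator {a..} x \<partial>lborel)"
    by (rule distributed_integral[OF assms, symmetric]) (auto simp: normal_density_def)
  also have "\<dots> = gaussQ a"
    unfolding gaussQ_def set_lebesgue_integral_def integral_mult_right_zero[symmetric]
    by (intro Bochner_Integration.integral_cong) (auto simp: std_normal_density_def indicator_def)
  finally show ?thesis .
qed

lemma (in prob_space) normal_tail:
  assumes "distributed M lborel V (normal_density 0 \<sigma>)" "\<sigma> > 0" "t > 0"
  shows "prob {\<omega>\<in>space M. t \<le> \<bar>V \<omega>\<bar>} \<le> 2 * gaussQ (t/\<sigma>)"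
proof -
  have [measurable]: "V \<in> borel_measurable M" using distributed_measurable[OF assms(1)] by simp
  have d1: "distributed M lborel (\<lambda>x. 0 + (1/\<sigma>) * V x) (normal_density (0 + (1/\<sigma>) * 0) (\<bar>1/\<sigma>\<bar> * \<sigma>))"
    by (rule normal_density_affine[OF assms(1) assms(2)]) (use assms in auto)
  have d2: "distributed M lborel (\<lambda>x. 0 + (-1/\<sigma>) * V x) (normal_density (0 + (-1/\<sigma>) * 0) (\<bar>-1/\<sigma>\<bar> * \<sigma>))"
    by (rule normal_density_affine[OF assms(1) assms(2)]) (use assms in auto)
  have e1: "\<bar>1/\<sigma>\<bar> * \<sigma> = 1" "\<bar>-1/\<sigma>\<bar> * \<sigma> = 1" using assms by auto
  have p1: "prob {\<omega>\<in>space M. t/\<sigma> \<le> 0 + (1/\<sigma>) * V \<omega>} = gaussQ (t/\<sigma>)"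
    by (rule std_tail) (use d1 e1 in simp)
  have p2: "prob {\<omega>\<in>space M. t/\<sigma> \<le> 0 + (-1/\<sigma>) * V \<omega>} = gaussQ (t/\<sigma>)"
    by (rule std_tail) (use d2 e1 in simp)
  have sub: "{\<omega>\<in>space M. t \<le> \<bar>V \<omega>\<bar>} \<subseteq> {\<omega>\<in>space M. t/\<sigma> \<le> 0 + (1/\<sigma>) * V \<omega>} \<union> {\<omega>\<in>space M. t/\<sigma> \<le> 0 + (-1/\<sigma>) * V \<omega>}"
  proof
    fix \<omega> assume "\<omega> \<in> {\<omega>\<in>space M. t \<le> \<bar>V \<omega>\<bar>}"
    then have "\<omega> \<in> space M" "t \<le> V \<omega> \<or> t \<le> - V \<omega>" by auto
    moreover have "t \<le> V \<omega> \<Longrightarrow> t/\<sigma> \<le> V \<omega> / \<sigma>" using assms(2) by (simp add: divide_right_mono)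
    moreover have "t \<le> - V \<omega> \<Longrightarrow> t/\<sigma> \<le> - V \<omega> / \<sigma>" using assms(2) divide_right_mono[of t "- V \<omega>" \<sigma>] by simp
    ultimately show "\<omega> \<in> {\<omega>\<in>space M. t/\<sigma> \<le> 0 + (1/\<sigma>) * V \<omega>} \<union> {\<omega>\<in>space M. t/\<sigma> \<le> 0 + (-1/\<sigma>) * V \<omega>}"
      using assms(2) by (auto simp: divide_right_mono)
  qed
  have "prob {\<omega>\<in>space M. t \<le> \<bar>V \<omega>\<bar>} \<le> prob ({\<omega>\<in>space M. t/\<sigma> \<le> 0 + (1/\<sigma>) * V \<omega>} \<union> {\<omega>\<in>space M. t/\<sigma> \<le> 0 + (-1/\<sigma>) * V \<omega>})"
    by (rule finite_measure_mono[OF sub]) measurable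
  also have "\<dots> \<le> prob {\<omega>\<in>space M. t/\<sigma> \<le> 0 + (1/\<sigma>) * V \<omega>} + prob {\<omega>\<in>space M. t/\<sigma> \<le> 0 + (-1/\<sigma>) * V \<omega>}"
    by (rule measure_Un_le) measurable
  finally show ?thesis using p1 p2 by simp
qed

lemma ennr_le4:
  fixes P Q R T y :: ennreal
  shows "y \<le> P \<Longrightarrow> y \<le> P+Q+(R+T)" "y \<le> Q \<Longrightarrow> y \<le> P+Q+(R+T)"
    "y \<le> R \<Longrightarrow> y \<le> P+Q+(R+T)" "y \<le> T \<Longrightarrow> y \<le> P+Q+(R+T)"
  by (simp_all add: add.assoc add_increasing add_increasing2)

lemma ennr_le_suminf: fixes f :: "nat \<Rightarrow> ennreal" shows "f n \<le> suminf f"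
  using sum_le_suminf[of f "{n}"] by (auto intro: summableI)

lemma S_borel: "(\<Union>i::int. {real_of_int i * d - w/2 .. real_of_int i * d + w/2}) \<in> sets borel"
  by measurable
lemma borel_measurable_quant[measurable]: "quant d \<in> borel_measurable borel"
  unfolding quant_def[abs_def] by measurable


theorem lemma6:
  fixes M :: "'a measure" and X V :: "'a \<Rightarrow> real" and d w ov \<sigma> :: real
  assumes "prob_space M"
    and "X \<in> borel_measurable M" and "V \<in> borel_measurable M"
    and "prob_space.indep_var M borel X borel V"
    and "\<sigma> > 0"
    and "distributed M lborel V (normal_density 0 \<sigma>)"
    and "d \<noteq> 0" and "w \<ge> 0" and "ov \<ge> 0" and "\<bar>d\<bar> > w"
    and "df_le M X d w ov"
  shows "(\<integral>\<^sup>+ \<omega>. ennreal ((X \<omega> - quant d (X \<omega> + V \<omega>))\<^sup>2) \<partial>M)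
    \<le> (\<integral>\<^sup>+ \<omega>. ennreal ((X \<omega> - quant d (X \<omega>))\<^sup>2) \<partial>M)
      + (\<Sum>n. ennreal ((real (n+1) * \<bar>d\<bar> + w/2)\<^sup>2 * 2 *
              gaussQ (((2 * real (n+1) - 1) * \<bar>d\<bar> - w) / (2 * \<sigma>))))
      + ennreal ov * (ennreal ((d + d/2)\<^sup>2)
          + (\<Sum>n. ennreal ((real (n+2) * d + d/2)\<^sup>2 * 2 *
              gaussQ ((real (n+2) - 1) * \<bar>d\<bar> / \<sigma>))))"
proof -
  interpret prob_space M by fact
  note [measurable] = assms(2,3)
  define S where "S = (\<Union>i::int. {real_of_int i * d - w/2 .. real_of_int i * d + w/2})"
  have S[measurable]: "S \<in> sets borel" unfolding S_def by (rule S_borel)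
  define Bad where "Bad = {\<omega>\<in>space M. X \<omega> \<notin> S}"
  define t1 where "t1 n = ((2 * real (n+1) - 1) * \<bar>d\<bar> - w) / 2" for n :: nat
  define t2 where "t2 n = (real (n+2) - 1) * \<bar>d\<bar>" for n :: nat
  define E1 where "E1 n = {\<omega>\<in>space M. t1 n \<le> \<bar>V \<omega>\<bar>}" for n
  define E2 where "E2 n = {\<omega>\<in>space M. t2 n \<le> \<bar>V \<omega>\<bar>}" for n
  define a where "a n = (real (n+1) * \<bar>d\<bar> + w/2)\<^sup>2" for n :: nat
  define b where "b n = (real (n+2) * d + d/2)\<^sup>2" for n :: nat
  define C where "C = (d + d/2)\<^sup>2"
  have Bad_sets[measurable]: "Bad \<in> sets M" unfolding Bad_def by measurable
  have E1_sets[measurable]: "E1 n \<in> sets M" for n unfolding E1_def by measurable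
  have E2_sets[measurable]: "E2 n \<in> sets M" for n unfolding E2_def by measurable
  define F where "F \<omega> = ennreal ((X \<omega> - quant d (X \<omega>))\<^sup>2) + (\<Sum>n. ennreal (a n) * indicator (E1 n) \<omega>)
      + (ennreal C * indicator Bad \<omega> + (\<Sum>n. ennreal (b n) * indicator (Bad \<inter> E2 n) \<omega>))" for \<omega>
  have pt: "ennreal ((X \<omega> - quant d (X \<omega> + V \<omega>))\<^sup>2) \<le> F \<omega>" if \<omega>: "\<omega> \<in> space M" for \<omega>
  proof (cases "X \<omega> \<in> S")
    case True
    have r: "\<bar>X \<omega> - quant d (X \<omega>)\<bar> \<le> w/2"
      using quant_res_good[OF assms(7,8,10)] True unfolding S_def by blast
    from quant_pt[OF assms(7) r, of "V \<omega>"] show ?thesis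
    proof
      assume "(X \<omega> - quant d (X \<omega> + V \<omega>))\<^sup>2 = (X \<omega> - quant d (X \<omega>))\<^sup>2"
      then show ?thesis unfolding F_def by (intro ennr_le4(1)) simp
    next
      assume "\<exists>n::nat. (X \<omega> - quant d (X \<omega> + V \<omega>))\<^sup>2 \<le> (real (n+1) * \<bar>d\<bar> + w/2)\<^sup>2 \<and>
         (real (n+1) - 1/2) * \<bar>d\<bar> - w/2 \<le> \<bar>V \<omega>\<bar>"
      then obtain n where n1: "(X \<omega> - quant d (X \<omega> + V \<omega>))\<^sup>2 \<le> a n"
        and n2: "(real (n+1) - 1/2) * \<bar>d\<bar> - w/2 \<le> \<bar>V \<omega>\<bar>" unfolding a_def by blast
      have "t1 n = (real (n+1) - 1/2) * \<bar>d\<bar> - w/2" unfolding t1_def by (simp add: field_simps)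
      then have "\<omega> \<in> E1 n" using n2 \<omega> unfolding E1_def by simp
      then have "ennreal ((X \<omega> - quant d (X \<omega> + V \<omega>))\<^sup>2) \<le> ennreal (a n) * indicator (E1 n) \<omega>"
        using n1 by (simp add: ennreal_leI)
      also have "\<dots> \<le> (\<Sum>n. ennreal (a n) * indicator (E1 n) \<omega>)" by (rule ennr_le_suminf)
      finally show ?thesis unfolding F_def by (rule ennr_le4(2))
    qed
  next
    case False
    then have bad: "\<omega> \<in> Bad" unfolding Bad_def using \<omega> by simp
    have r: "\<bar>X \<omega> - quant d (X \<omega>)\<bar> \<le> \<bar>d\<bar>/2" by (rule quant_res_le[OF assms(7)])
    from quant_pt[OF assms(7) r, of "V \<omega>"] show ?thesis
    proof
      assume "(X \<omega> - quant d (X \<omega> + V \<omega>))\<^sup>2 = (X \<omega> - quant d (X \<omega>))\<^sup>2"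
      then show ?thesis unfolding F_def by (intro ennr_le4(1)) simp
    next
      assume "\<exists>n::nat. (X \<omega> - quant d (X \<omega> + V \<omega>))\<^sup>2 \<le> (real (n+1) * \<bar>d\<bar> + \<bar>d\<bar>/2)\<^sup>2 \<and>
         (real (n+1) - 1/2) * \<bar>d\<bar> - \<bar>d\<bar>/2 \<le> \<bar>V \<omega>\<bar>"
      then obtain n where n1: "(X \<omega> - quant d (X \<omega> + V \<omega>))\<^sup>2 \<le> (real (n+1) * \<bar>d\<bar> + \<bar>d\<bar>/2)\<^sup>2"
        and n2: "(real (n+1) - 1/2) * \<bar>d\<bar> - \<bar>d\<bar>/2 \<le> \<bar>V \<omega>\<bar>" by blast
      show ?thesis
      proof (cases n)
        case 0
        have "(real (n+1) * \<bar>d\<bar> + \<bar>d\<bar>/2)\<^sup>2 = C"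
          unfolding C_def 0 by (cases "d \<ge> 0") (simp_all add: power2_eq_square algebra_simps)
        then have "ennreal ((X \<omega> - quant d (X \<omega> + V \<omega>))\<^sup>2) \<le> ennreal C * indicator Bad \<omega>"
          using n1 bad by (simp add: ennreal_leI)
        then show ?thesis unfolding F_def by (rule ennr_le4(3))
      next
        case (Suc m)
        have "(real (n+1) * \<bar>d\<bar> + \<bar>d\<bar>/2)\<^sup>2 = b m"
          unfolding b_def Suc by (cases "d \<ge> 0") (simp_all add: power2_eq_square algebra_simps)
        moreover have "t2 m = (real (n+1) - 1/2) * \<bar>d\<bar> - \<bar>d\<bar>/2" unfolding t2_def Suc by (simp add: field_simps)
        then have "\<omega> \<in> Bad \<inter> E2 m" using n2 \<omega> bad unfolding E2_def by simp
        ultimately have "ennreal ((X \<omega> - quant d (X \<omega> + V \<omega>))\<^sup>2) \<le> ennreal (b m) * indicator (Bad \<inter> E2 m) \<omega>"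
          using n1 by (simp add: ennreal_leI)
        also have "\<dots> \<le> (\<Sum>n. ennreal (b n) * indicator (Bad \<inter> E2 n) \<omega>)" by (rule ennr_le_suminf)
        finally show ?thesis unfolding F_def by (rule ennr_le4(4))
      qed
    qed
  qed
  have step1: "(\<integral>\<^sup>+ \<omega>. ennreal ((X \<omega> - quant d (X \<omega> + V \<omega>))\<^sup>2) \<partial>M) \<le> integral\<^sup>N M F"
    by (rule nn_integral_mono) (rule pt)
  have step2: "integral\<^sup>N M F = (\<integral>\<^sup>+ \<omega>. ennreal ((X \<omega> - quant d (X \<omega>))\<^sup>2) \<partial>M)
      + (\<Sum>n. ennreal (a n) * emeasure M (E1 n))
      + (ennreal C * emeasure M Bad + (\<Sum>n. ennreal (b n) * emeasure M (Bad \<inter> E2 n)))"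
    unfolding F_def
    apply (subst nn_integral_add, measurable)+
    apply (subst nn_integral_suminf, measurable)+
    apply (simp add: nn_integral_cmult_indicator)
    done
  have t1pos: "t1 n > 0" for n
  proof -
    have "(2 * real (n+1) - 1) * \<bar>d\<bar> \<ge> 1 * \<bar>d\<bar>" by (intro mult_right_mono) auto
    then show ?thesis unfolding t1_def using assms(10) by simp
  qed
  have t2pos: "t2 n > 0" for n unfolding t2_def using assms(7) by simp
  have hp1: "prob (E1 n) \<le> 2 * gaussQ (((2 * real (n+1) - 1) * \<bar>d\<bar> - w) / (2 * \<sigma>))" for n
  proof -
    have "t1 n / \<sigma> = ((2 * real (n+1) - 1) * \<bar>d\<bar> - w) / (2 * \<sigma>)" unfolding t1_def by simp
    then show ?thesis using normal_tail[OF assms(6,5) t1pos[of n]] unfolding E1_def by simp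
  qed
  have hp2: "prob (E2 n) \<le> 2 * gaussQ ((real (n+2) - 1) * \<bar>d\<bar> / \<sigma>)" for n
    using normal_tail[OF assms(6,5) t2pos[of n]] unfolding E2_def t2_def by simp
  have hpB: "prob Bad \<le> ov" using assms(11) unfolding df_le_def Bad_def S_def by simp
  have hind: "prob (Bad \<inter> E2 n) = prob Bad * prob (E2 n)" for n
  proof -
    have "prob ((\<lambda>x. (X x, V x)) -` ((- S) \<times> {v. t2 n \<le> \<bar>v\<bar>}) \<inter> space M) =
      prob (X -` (- S) \<inter> space M) * prob (V -` {v. t2 n \<le> \<bar>v\<bar>} \<inter> space M)"
      by (rule indep_varD[OF assms(4)]) measurable
    moreover have "(\<lambda>x. (X x, V x)) -` ((- S) \<times> {v. t2 n \<le> \<bar>v\<bar>}) \<inter> space M = Bad \<inter> E2 n"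
      unfolding Bad_def E2_def by auto
    moreover have "X -` (- S) \<inter> space M = Bad" unfolding Bad_def by auto
    moreover have "V -` {v. t2 n \<le> \<bar>v\<bar>} \<inter> space M = E2 n" unfolding E2_def by auto
    ultimately show ?thesis by simp
  qed
  have a0: "a n \<ge> 0" "b n \<ge> 0" for n unfolding a_def b_def by simp_all
  have T1: "(\<Sum>n. ennreal (a n) * emeasure M (E1 n)) \<le>
     (\<Sum>n. ennreal ((real (n+1) * \<bar>d\<bar> + w/2)\<^sup>2 * 2 *
              gaussQ (((2 * real (n+1) - 1) * \<bar>d\<bar> - w) / (2 * \<sigma>))))"
  proof (intro suminf_le summableI)
    fix n
    have "a n * prob (E1 n) \<le> a n * (2 * gaussQ (((2 * real (n+1) - 1) * \<bar>d\<bar> - w) / (2 * \<sigma>)))"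
      by (rule mult_left_mono[OF hp1 a0(1)])
    then show "ennreal (a n) * emeasure M (E1 n) \<le> ennreal ((real (n+1) * \<bar>d\<bar> + w/2)\<^sup>2 * 2 *
              gaussQ (((2 * real (n+1) - 1) * \<bar>d\<bar> - w) / (2 * \<sigma>)))"
      unfolding emeasure_eq_measure using a0(1)[of n]
      by (simp add: ennreal_mult[symmetric] ennreal_leI a_def mult.assoc)
  qed
  have T2a: "ennreal C * emeasure M Bad \<le> ennreal ov * ennreal C"
  proof -
    have "C * prob Bad \<le> ov * C" using mult_right_mono[OF hpB, of C] unfolding C_def by (simp add: mult.commute)
    moreover have "ennreal ov * ennreal C = ennreal (ov*C)" using assms(9) by (simp add: ennreal_mult C_def)
    moreover have "ennreal C * ennreal (prob Bad) = ennreal (C * prob Bad)" by (simp add: ennreal_mult C_def)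
    ultimately show ?thesis unfolding emeasure_eq_measure by (simp add: ennreal_leI)
  qed
  have ovm: "ennreal ov * ennreal y = ennreal (ov * y)" for y using ennreal_mult'[OF assms(9)] by simp
  have T2b: "(\<Sum>n. ennreal (b n) * emeasure M (Bad \<inter> E2 n)) \<le>
     (\<Sum>n. ennreal ov * ennreal ((real (n+2) * d + d/2)\<^sup>2 * 2 * gaussQ ((real (n+2) - 1) * \<bar>d\<bar> / \<sigma>)))"
  proof (intro suminf_le summableI)
    fix n
    have "prob Bad * prob (E2 n) \<le> ov * (2 * gaussQ ((real (n+2) - 1) * \<bar>d\<bar> / \<sigma>))"
      by (rule mult_mono[OF hpB hp2]) (simp_all add: assms(9))
    then have "b n * (prob Bad * prob (E2 n)) \<le> b n * (ov * (2 * gaussQ ((real (n+2) - 1) * \<bar>d\<bar> / \<sigma>)))"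
      by (rule mult_left_mono) (rule a0(2))
    then show "ennreal (b n) * emeasure M (Bad \<inter> E2 n) \<le> ennreal ov * ennreal ((real (n+2) * d + d/2)\<^sup>2 * 2 * gaussQ ((real (n+2) - 1) * \<bar>d\<bar> / \<sigma>))"
      unfolding emeasure_eq_measure hind using a0(2)[of n] assms(9)
      by (simp add: ovm ennreal_mult[symmetric] ennreal_leI b_def mult_ac)
  qed
  have T2: "ennreal C * emeasure M Bad + (\<Sum>n. ennreal (b n) * emeasure M (Bad \<inter> E2 n)) \<le>
    ennreal ov * (ennreal ((d + d/2)\<^sup>2)
          + (\<Sum>n. ennreal ((real (n+2) * d + d/2)\<^sup>2 * 2 *
              gaussQ ((real (n+2) - 1) * \<bar>d\<bar> / \<sigma>))))"
    unfolding distrib_left ennreal_suminf_cmult[symmetric] C_def[symmetric]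
    by (rule add_mono[OF T2a T2b])
  show ?thesis
    using step1 unfolding step2 by (rule order_trans) (intro add_mono T1 T2 order_refl)
qed
end
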